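(* Consider the state process of the load-balancing system described in the context (under any dispatching policy), with $\lambda=1-N^{-\alpha}$, $0<\alpha<0.5$, and the Lyapunov function $V(s)=\frac{p\lambda}{\mu_2}-s_{1,2}$ on $\mathcal S^{(N)}$. Then for $s\in\mathcal S^{(N)}$: (i) if $V(s)\ge\left(\frac{p\mu_1}{\mu_2}+\frac12\right)\frac{\log N}{\sqrt N}$ and $s_{1,1}\ge\frac{\lambda}{\mu_1}-\frac{\log N}{\sqrt N}$, then $\nabla V(s)\le -\frac{\mu_2}{2}\frac{\log N}{\sqrt N}$; (ii) if $V(s)\ge\left(\frac{p\mu_1}{\mu_2}+\frac12\right)\frac{\log N}{\sqrt N}$ and $s_{1,1}\le\frac{\lambda}{\mu_1}-\frac{\log N}{\sqrt N}$, then $\nabla V(s)\le 1$.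
   Context: System: $N$ identical servers, Poisson arrivals of rate $\lambda N$. Service times are Coxian-2 with parameters $(\mu_1,\mu_2,p)$, $\mu_1,\mu_2>0$, $0\le p<1$: a job in service completes phase 1 at rate $\mu_1$; then with probability $1-p$ it leaves, and with probability $p$ it enters phase 2, completed at rate $\mu_2$; $\frac1{\mu_1}+\frac p{\mu_2}=1$. Each server holds at most $b$ jobs (one in service, the rest in its buffer, served in order). The state $s=(s_{i,m})$ has $s_{i,m}$ = fraction of servers with at least $i$ jobs whose job in service is in phase $m$; state space $\mathcal S^{(N)}=\{s\in\mathbb R^{b\times2}: 1\ge s_{1,m}\ge\cdots\ge s_{b,m}\ge0,\ s_{1,1}+s_{1,2}\le1,\ Ns_{i,m}\in\mathbb N\}$. The state evolves as a CTMC with transition rates $q_{s,s'}$ induced by arrivals (dispatched by the policy), phase-1 completions, and phase-2 completions; the drift of $V$ at $s$ is $\nabla V(s)=\sum_{s'\ne s}q_{s,s'}(V(s')-V(s))$. *)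

theory Defs
  imports Complex_Main
begin

text \<open>A state is s :: nat => nat => real, where s i m is the fraction of servers with
  at least i jobs whose job in service is in phase m (1 <= i <= b, m in {1,2});
  all other entries are 0 (so in particular s (b+1) m = 0).\<close>

type_synonym lbstate = "nat \<Rightarrow> nat \<Rightarrow> real"

definition state_space :: "nat \<Rightarrow> nat \<Rightarrow> lbstate set" where
  "state_space N b = {s.
     (\<forall>i m. \<not> (1 \<le> i \<and> i \<le> b \<and> (m = 1 \<or> m = 2)) \<longrightarrow> s i m = 0) \<and>
     (\<forall>m\<in>{1,2}. s 1 m \<le> 1 \<and> (\<forall>i. 1 \<le> i \<and> i < b \<longrightarrow> s (Suc i) m \<le> s i m) \<and> 0 \<le> s b m) \<and>
     s 1 1 + s 1 2 \<le> 1 \<and>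
     (\<forall>i m. \<exists>k::nat. real N * s i m = real k)}"

text \<open>Arrival to a server making it count in class (i,m): s i m increases by 1/N.
  (i,m)=(1,1): arrival to an idle server; i >= 2: arrival to a server with i-1 jobs
  whose job in service is in phase m.\<close>
definition arr_tgt :: "nat \<Rightarrow> lbstate \<Rightarrow> nat \<Rightarrow> nat \<Rightarrow> lbstate" where
  "arr_tgt N s i m = (\<lambda>j k. if j = i \<and> k = m then s j k + 1 / real N else s j k)"

text \<open>Phase-1 completion at a server with exactly i jobs, job moves to phase 2.\<close>
definition p1_to_p2 :: "nat \<Rightarrow> lbstate \<Rightarrow> nat \<Rightarrow> lbstate" where
  "p1_to_p2 N s i = (\<lambda>j k. if 1 \<le> j \<and> j \<le> i \<and> k = 1 then s j k - 1 / real N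
      else if 1 \<le> j \<and> j \<le> i \<and> k = 2 then s j k + 1 / real N else s j k)"

text \<open>Phase-1 completion at a server with exactly i jobs, job leaves; next job starts in phase 1.\<close>
definition p1_leave :: "nat \<Rightarrow> lbstate \<Rightarrow> nat \<Rightarrow> lbstate" where
  "p1_leave N s i = (\<lambda>j k. if j = i \<and> k = 1 then s j k - 1 / real N else s j k)"

text \<open>Phase-2 completion at a server with exactly i jobs; next job (if any) starts in phase 1.\<close>
definition p2_done :: "nat \<Rightarrow> lbstate \<Rightarrow> nat \<Rightarrow> lbstate" where
  "p2_done N s i = (\<lambda>j k. if 1 \<le> j \<and> j \<le> i \<and> k = 2 then s j k - 1 / real N
      else if 1 \<le> j \<and> j < i \<and> k = 1 then s j k + 1 / real N else s j k)"

definition arr_feasible :: "nat \<Rightarrow> lbstate \<Rightarrow> nat \<Rightarrow> nat \<Rightarrow> bool" where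
  "arr_feasible b s i m =
     ((i = 1 \<and> m = 1 \<and> s 1 1 + s 1 2 < 1) \<or>
      (2 \<le> i \<and> i \<le> b \<and> (m = 1 \<or> m = 2) \<and> s i m < s (i - 1) m))"

text \<open>A dispatching policy: sigma s i m is the probability that an arrival in state s
  is routed to a server so that s i m increases. It is supported on feasible classes and
  routes every arrival unless all servers are full (then the arrival is blocked).\<close>
definition policy :: "nat \<Rightarrow> nat \<Rightarrow> (lbstate \<Rightarrow> nat \<Rightarrow> nat \<Rightarrow> real) \<Rightarrow> bool" where
  "policy N b \<sigma> = (\<forall>s\<in>state_space N b.
      (\<forall>i m. 0 \<le> \<sigma> s i m) \<and>
      (\<forall>i m. \<not> arr_feasible b s i m \<longrightarrow> \<sigma> s i m = 0) \<and>
      (s b 1 + s b 2 < 1 \<longrightarrow> (\<Sum>i\<in>{1..b}. \<Sum>m\<in>{1,2}. \<sigma> s i m) = 1))"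

definition rate :: "nat \<Rightarrow> nat \<Rightarrow> real \<Rightarrow> real \<Rightarrow> real \<Rightarrow> real \<Rightarrow>
    (lbstate \<Rightarrow> nat \<Rightarrow> nat \<Rightarrow> real) \<Rightarrow> lbstate \<Rightarrow> lbstate \<Rightarrow> real" where
  "rate N b lam mu1 mu2 p \<sigma> s s' =
     (\<Sum>i\<in>{1..b}. \<Sum>m\<in>{1,2}. if s' = arr_tgt N s i m then lam * real N * \<sigma> s i m else 0)
   + (\<Sum>i\<in>{1..b}. if s' = p1_to_p2 N s i then real N * (s i 1 - s (Suc i) 1) * mu1 * p else 0)
   + (\<Sum>i\<in>{1..b}. if s' = p1_leave N s i then real N * (s i 1 - s (Suc i) 1) * mu1 * (1 - p) else 0)
   + (\<Sum>i\<in>{1..b}. if s' = p2_done N s i then real N * (s i 2 - s (Suc i) 2) * mu2 else 0)"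

text \<open>All possible targets from s (q s s' = 0 outside this finite set).\<close>
definition targets :: "nat \<Rightarrow> nat \<Rightarrow> lbstate \<Rightarrow> lbstate set" where
  "targets N b s = (\<lambda>(i, m). arr_tgt N s i m) ` ({1..b} \<times> {1,2})
     \<union> p1_to_p2 N s ` {1..b} \<union> p1_leave N s ` {1..b} \<union> p2_done N s ` {1..b}"

definition drift :: "nat \<Rightarrow> nat \<Rightarrow> real \<Rightarrow> real \<Rightarrow> real \<Rightarrow> real \<Rightarrow>
    (lbstate \<Rightarrow> nat \<Rightarrow> nat \<Rightarrow> real) \<Rightarrow> (lbstate \<Rightarrow> real) \<Rightarrow> lbstate \<Rightarrow> real" where
  "drift N b lam mu1 mu2 p \<sigma> V s =
     (\<Sum>s'\<in>targets N b s - {s}. rate N b lam mu1 mu2 p \<sigma> s s' * (V s' - V s))"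

end

theory Submission
  imports Defs
begin

lemma delta_sum:
  fixes f :: "'a \<Rightarrow> real" and r :: real
  assumes "finite A" "t \<in> A" "f s = 0"
  shows "(\<Sum>x\<in>A - {s}. (if x = t then r else 0) * f x) = r * f t"
proof -
  have "(\<Sum>x\<in>A - {s}. (if x = t then r else 0) * f x) = (\<Sum>x\<in>A - {s}. if x = t then r * f t else 0)"
    by (rule sum.cong) auto
  also have "\<dots> = (if t \<in> A - {s} then r * f t else 0)"
    using assms(1) by (simp add: sum.delta')
  also have "\<dots> = r * f t" using assms by auto
  finally show ?thesis .
qed

lemma drift_formula:
  assumes N: "N \<ge> 1" and pol: "policy N b \<sigma>" and sS: "s \<in> state_space N b"
  shows "drift N b lam ma mb p \<sigma> (\<lambda>x. c - x 1 2) s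
     = (\<Sum>i\<in>{1..b}. - ((s i 1 - s (Suc i) 1) * ma * p)) + (\<Sum>i\<in>{1..b}. (s i 2 - s (Suc i) 2) * mb)"
proof -
  define V where "V = (\<lambda>x::lbstate. c - x 1 2)"
  define f where "f = (\<lambda>x. V x - V s)"
  define A where "A = targets N b s"
  have fin: "finite A" unfolding A_def targets_def by auto
  have f0: "f s = 0" unfolding f_def by simp
  have NN: "real N * (1 / real N) = 1" using N by simp
  have sig: "\<sigma> s 1 2 = 0"
    using pol sS unfolding policy_def arr_feasible_def by auto
  let ?R1 = "\<lambda>x. (\<Sum>i\<in>{1..b}. \<Sum>m\<in>{1,2::nat}. if x = arr_tgt N s i m then lam * real N * \<sigma> s i m else 0)"
  let ?R2 = "\<lambda>x. (\<Sum>i\<in>{1..b}. if x = p1_to_p2 N s i then real N * (s i 1 - s (Suc i) 1) * ma * p else 0)"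
  let ?R3 = "\<lambda>x. (\<Sum>i\<in>{1..b}. if x = p1_leave N s i then real N * (s i 1 - s (Suc i) 1) * ma * (1 - p) else 0)"
  let ?R4 = "\<lambda>x. (\<Sum>i\<in>{1..b}. if x = p2_done N s i then real N * (s i 2 - s (Suc i) 2) * mb else 0)"
  have "drift N b lam ma mb p \<sigma> V s = (\<Sum>x\<in>A - {s}. (?R1 x + ?R2 x + ?R3 x + ?R4 x) * f x)"
    unfolding drift_def rate_def A_def f_def by simp
  also have "\<dots> = (\<Sum>x\<in>A - {s}. ?R1 x * f x) + (\<Sum>x\<in>A - {s}. ?R2 x * f x)
      + (\<Sum>x\<in>A - {s}. ?R3 x * f x) + (\<Sum>x\<in>A - {s}. ?R4 x * f x)"
    by (simp add: distrib_right sum.distrib)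
  also have "(\<Sum>x\<in>A - {s}. ?R1 x * f x) = 0"
  proof -
    have "(\<Sum>x\<in>A - {s}. ?R1 x * f x) = (\<Sum>i\<in>{1..b}. \<Sum>m\<in>{1,2::nat}. \<Sum>x\<in>A - {s}.
        (if x = arr_tgt N s i m then lam * real N * \<sigma> s i m else 0) * f x)"
      by (simp add: sum_distrib_right distrib_right sum.swap[of _ "A - {s}"])
    also have "\<dots> = (\<Sum>i\<in>{1..b}. \<Sum>m\<in>{1,2::nat}. lam * real N * \<sigma> s i m * f (arr_tgt N s i m))"
    proof (intro sum.cong refl)
      fix i m assume "i \<in> {1..b}" "m \<in> {1,2::nat}"
      then have "arr_tgt N s i m \<in> A" unfolding A_def targets_def by auto
      then show "(\<Sum>x\<in>A - {s}. (if x = arr_tgt N s i m then lam * real N * \<sigma> s i m else 0) * f x)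
          = lam * real N * \<sigma> s i m * f (arr_tgt N s i m)"
        using delta_sum[where f=f and s=s, OF fin _ f0] by blast
    qed
    also have "\<dots> = 0"
    proof (rule sum.neutral, rule ballI)
      fix i assume "i \<in> {1..b}"
      show "(\<Sum>m\<in>{1,2::nat}. lam * real N * \<sigma> s i m * f (arr_tgt N s i m)) = 0"
        using sig unfolding f_def V_def arr_tgt_def by auto
    qed
    finally show ?thesis .
  qed
  also have "(\<Sum>x\<in>A - {s}. ?R2 x * f x) = (\<Sum>i\<in>{1..b}. - ((s i 1 - s (Suc i) 1) * ma * p))"
  proof -
    have "(\<Sum>x\<in>A - {s}. ?R2 x * f x) = (\<Sum>i\<in>{1..b}. \<Sum>x\<in>A - {s}.
        (if x = p1_to_p2 N s i then real N * (s i 1 - s (Suc i) 1) * ma * p else 0) * f x)"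
      by (simp add: sum_distrib_right sum.swap[of _ "A - {s}"])
    also have "\<dots> = (\<Sum>i\<in>{1..b}. real N * (s i 1 - s (Suc i) 1) * ma * p * f (p1_to_p2 N s i))"
    proof (intro sum.cong refl)
      fix i assume "i \<in> {1..b}"
      then have "p1_to_p2 N s i \<in> A" unfolding A_def targets_def by auto
      then show "(\<Sum>x\<in>A - {s}. (if x = p1_to_p2 N s i then real N * (s i 1 - s (Suc i) 1) * ma * p else 0) * f x)
          = real N * (s i 1 - s (Suc i) 1) * ma * p * f (p1_to_p2 N s i)"
        using delta_sum[where f=f and s=s, OF fin _ f0] by blast
    qed
    also have "\<dots> = (\<Sum>i\<in>{1..b}. - ((s i 1 - s (Suc i) 1) * ma * p))"
    proof (intro sum.cong refl)
      fix i assume "i \<in> {1..b}"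
      then have "f (p1_to_p2 N s i) = - (1 / real N)" unfolding f_def V_def p1_to_p2_def by auto
      then show "real N * (s i 1 - s (Suc i) 1) * ma * p * f (p1_to_p2 N s i) = - ((s i 1 - s (Suc i) 1) * ma * p)"
        using N by simp
    qed
    finally show ?thesis .
  qed
  also have "(\<Sum>x\<in>A - {s}. ?R3 x * f x) = 0"
  proof -
    have "(\<Sum>x\<in>A - {s}. ?R3 x * f x) = (\<Sum>i\<in>{1..b}. \<Sum>x\<in>A - {s}.
        (if x = p1_leave N s i then real N * (s i 1 - s (Suc i) 1) * ma * (1 - p) else 0) * f x)"
      by (simp add: sum_distrib_right sum.swap[of _ "A - {s}"])
    also have "\<dots> = (\<Sum>i\<in>{1..b}. real N * (s i 1 - s (Suc i) 1) * ma * (1 - p) * f (p1_leave N s i))"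
    proof (intro sum.cong refl)
      fix i assume "i \<in> {1..b}"
      then have "p1_leave N s i \<in> A" unfolding A_def targets_def by auto
      then show "(\<Sum>x\<in>A - {s}. (if x = p1_leave N s i then real N * (s i 1 - s (Suc i) 1) * ma * (1 - p) else 0) * f x)
          = real N * (s i 1 - s (Suc i) 1) * ma * (1 - p) * f (p1_leave N s i)"
        using delta_sum[where f=f and s=s, OF fin _ f0] by blast
    qed
    also have "\<dots> = 0"
      by (intro sum.neutral ballI) (simp add: f_def V_def p1_leave_def)
    finally show ?thesis .
  qed
  also have "(\<Sum>x\<in>A - {s}. ?R4 x * f x) = (\<Sum>i\<in>{1..b}. (s i 2 - s (Suc i) 2) * mb)"
  proof -
    have "(\<Sum>x\<in>A - {s}. ?R4 x * f x) = (\<Sum>i\<in>{1..b}. \<Sum>x\<in>A - {s}.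
        (if x = p2_done N s i then real N * (s i 2 - s (Suc i) 2) * mb else 0) * f x)"
      by (simp add: sum_distrib_right sum.swap[of _ "A - {s}"])
    also have "\<dots> = (\<Sum>i\<in>{1..b}. real N * (s i 2 - s (Suc i) 2) * mb * f (p2_done N s i))"
    proof (intro sum.cong refl)
      fix i assume "i \<in> {1..b}"
      then have "p2_done N s i \<in> A" unfolding A_def targets_def by auto
      then show "(\<Sum>x\<in>A - {s}. (if x = p2_done N s i then real N * (s i 2 - s (Suc i) 2) * mb else 0) * f x)
          = real N * (s i 2 - s (Suc i) 2) * mb * f (p2_done N s i)"
        using delta_sum[where f=f and s=s, OF fin _ f0] by blast
    qed
    also have "\<dots> = (\<Sum>i\<in>{1..b}. (s i 2 - s (Suc i) 2) * mb)"
    proof (intro sum.cong refl)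
      fix i assume "i \<in> {1..b}"
      then have "f (p2_done N s i) = 1 / real N" unfolding f_def V_def p2_done_def by auto
      then show "real N * (s i 2 - s (Suc i) 2) * mb * f (p2_done N s i) = (s i 2 - s (Suc i) 2) * mb"
        using N by simp
    qed
    finally show ?thesis .
  qed
  finally show ?thesis unfolding V_def by simp
qed

lemma telescope:
  fixes g :: "nat \<Rightarrow> real"
  shows "b \<ge> 1 \<Longrightarrow> (\<Sum>i\<in>{1..b}. g i - g (Suc i)) = g 1 - g (Suc b)"
proof (induction b)
  case 0 then show ?case by simp
next
  case (Suc b)
  show ?case
  proof (cases "b = 0")
    case True then show ?thesis by simp
  next
    case False
    then have "(\<Sum>i\<in>{1..Suc b}. g i - g (Suc i)) = (\<Sum>i\<in>{1..b}. g i - g (Suc i)) + (g (Suc b) - g (Suc (Suc b)))"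
      by simp
    then show ?thesis using Suc False by simp
  qed
qed

lemma nonneg11:
  assumes "s \<in> state_space N b" "b \<ge> 1"
  shows "0 \<le> s 1 1"
proof -
  have "0 \<le> s 1 1"
  proof (rule inc_induct[of 1 b "\<lambda>n. 0 \<le> s n 1"])
    show "1 \<le> b" using assms(2) .
    show "0 \<le> s b 1" using assms(1) unfolding state_space_def by auto
  next
    fix n assume st: "1 \<le> n" "n < b" "0 \<le> s (Suc n) 1"
    have "s (Suc n) 1 \<le> s n 1" using assms(1) st(1,2) unfolding state_space_def by auto
    then show "0 \<le> s n 1" using st(3) by linarith
  qed
  then show ?thesis .
qed

theorem lemma13:
  fixes N b :: nat and \<alpha> \<mu>1 \<mu>2 p :: real
    and \<sigma> :: "lbstate \<Rightarrow> nat \<Rightarrow> nat \<Rightarrow> real" and s :: lbstate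
  assumes "N \<ge> 1" and "b \<ge> 1"
    and "0 < \<alpha>" and "\<alpha> < 1/2"
    and "\<mu>1 > 0" and "\<mu>2 > 0" and "0 \<le> p" and "p < 1"
    and "1 / \<mu>1 + p / \<mu>2 = 1"
    and "policy N b \<sigma>"
    and "s \<in> state_space N b"
  defines "lam \<equiv> 1 - real N powr (- \<alpha>)"
  defines "V \<equiv> (\<lambda>x::lbstate. p * lam / \<mu>2 - x 1 2)"
  shows "(V s \<ge> (p * \<mu>1 / \<mu>2 + 1/2) * (ln (real N) / sqrt (real N)) \<and>
           s 1 1 \<ge> lam / \<mu>1 - ln (real N) / sqrt (real N) \<longrightarrow>
           drift N b lam \<mu>1 \<mu>2 p \<sigma> V s \<le> - (\<mu>2 / 2) * (ln (real N) / sqrt (real N)))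
       \<and> (V s \<ge> (p * \<mu>1 / \<mu>2 + 1/2) * (ln (real N) / sqrt (real N)) \<and>
           s 1 1 \<le> lam / \<mu>1 - ln (real N) / sqrt (real N) \<longrightarrow>
           drift N b lam \<mu>1 \<mu>2 p \<sigma> V s \<le> 1)"
proof -
  define L where "L = ln (real N) / sqrt (real N)"
  have L0: "L \<ge> 0" unfolding L_def using assms(1) by simp
  have sb: "s (Suc b) m = 0" for m using assms(11) unfolding state_space_def by auto
  have t1: "(\<Sum>i\<in>{1..b}. - ((s i 1 - s (Suc i) 1) * \<mu>1 * p)) = - (s 1 1 * \<mu>1 * p)"
  proof -
    have "(\<Sum>i\<in>{1..b}. - ((s i 1 - s (Suc i) 1) * \<mu>1 * p)) = - ((\<Sum>i\<in>{1..b}. s i 1 - s (Suc i) 1) * \<mu>1 * p)"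
      by (simp add: sum_distrib_right sum_negf)
    also have "\<dots> = - (s 1 1 * \<mu>1 * p)" using telescope[OF assms(2), of "\<lambda>i. s i 1"] sb by simp
    finally show ?thesis .
  qed
  have t2: "(\<Sum>i\<in>{1..b}. (s i 2 - s (Suc i) 2) * \<mu>2) = s 1 2 * \<mu>2"
  proof -
    have "(\<Sum>i\<in>{1..b}. (s i 2 - s (Suc i) 2) * \<mu>2) = (\<Sum>i\<in>{1..b}. s i 2 - s (Suc i) 2) * \<mu>2"
      by (simp add: sum_distrib_right)
    also have "\<dots> = s 1 2 * \<mu>2" using telescope[OF assms(2), of "\<lambda>i. s i 2"] sb by simp
    finally show ?thesis .
  qed
  have D: "drift N b lam \<mu>1 \<mu>2 p \<sigma> V s = - (s 1 1 * \<mu>1 * p) + s 1 2 * \<mu>2"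
    unfolding V_def using drift_formula[OF assms(1) assms(10) assms(11), where lam=lam and ma="\<mu>1" and mb="\<mu>2" and p=p and c="p * lam / \<mu>2"] t1 t2
    by simp
  have s12: "s 1 2 = p * lam / \<mu>2 - V s" unfolding V_def by simp
  have D2: "drift N b lam \<mu>1 \<mu>2 p \<sigma> V s = - (s 1 1 * \<mu>1 * p) + p * lam - \<mu>2 * V s"
  proof -
    have "\<mu>2 * s 1 2 = p * lam - \<mu>2 * V s" using s12 assms(6) by (simp add: field_simps)
    then show ?thesis using D by (simp add: algebra_simps)
  qed
  have lam1: "lam \<le> 1" unfolding lam_def by simp
  have s11: "0 \<le> s 1 1" using nonneg11[OF assms(11) assms(2)] .
  have c0: "0 \<le> p * \<mu>1 / \<mu>2 + 1/2" using assms(5,6,7) by simp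
  show ?thesis unfolding L_def[symmetric]
  proof (intro conjI impI)
    assume h: "(p * \<mu>1 / \<mu>2 + 1/2) * L \<le> V s \<and> lam / \<mu>1 - L \<le> s 1 1"
    have a: "\<mu>1 * p * (lam / \<mu>1 - L) \<le> \<mu>1 * p * s 1 1"
      using h assms(5,7) by (intro mult_left_mono) auto
    have a': "\<mu>1 * p * (lam / \<mu>1 - L) = p * lam - \<mu>1 * p * L" using assms(5) by (simp add: field_simps)
    have b: "\<mu>2 * ((p * \<mu>1 / \<mu>2 + 1/2) * L) \<le> \<mu>2 * V s"
      using h assms(6) by (intro mult_left_mono) auto
    have b': "\<mu>2 * ((p * \<mu>1 / \<mu>2 + 1/2) * L) = p * \<mu>1 * L + \<mu>2 / 2 * L" using assms(6) by (simp add: field_simps)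
    show "drift N b lam \<mu>1 \<mu>2 p \<sigma> V s \<le> - (\<mu>2 / 2) * L"
      using D2 a a' b b' by (simp add: algebra_simps)
  next
    assume h: "(p * \<mu>1 / \<mu>2 + 1/2) * L \<le> V s \<and> s 1 1 \<le> lam / \<mu>1 - L"
    have "0 \<le> (p * \<mu>1 / \<mu>2 + 1/2) * L" using c0 L0 by (rule mult_nonneg_nonneg)
    then have V0: "0 \<le> V s" using h by linarith
    have "0 \<le> s 1 1 * \<mu>1 * p" using s11 assms(5,7) by simp
    moreover have "0 \<le> \<mu>2 * V s" using V0 assms(6) by simp
    moreover have "p * lam \<le> 1"
    proof (cases "lam \<le> 0")
      case True then show ?thesis using assms(7) by (smt (verit) mult_nonneg_nonpos)
    next
      case False then show ?thesis using lam1 assms(7,8) mult_le_one[of p lam] by linarith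
    qed
    ultimately show "drift N b lam \<mu>1 \<mu>2 p \<sigma> V s \<le> 1" using D2 by linarith
  qed
qed

end
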